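(* Over a $4$-letter alphabet there is no complete bifurcate tree; more precisely, there is no complete bifurcate tree over a $4$-letter alphabet containing words of length more than $6$ (and since every complete bifurcate tree contains arbitrarily long words, none exists at all).
   Context: A square is a nonempty word of the form $XX$; a word is square-free if it has no (contiguous) factor that is a square. For a word $W$ of length $n$ and $0\le i\le n$, let $P_i(W)$, $S_i(W)$ be the prefix and suffix of $W$ of length $i$; an extension of $W$ at position $i$ over alphabet $\mathcal{A}$ is a word $P_i(W)\mathtt{x}S_{n-i}(W)$ with $\mathtt{x}\in\mathcal{A}$. A square-free word of length $n$ is bifurcate over $\mathcal{A}$ if for each position $i\in\{0,\dots,n\}$ it has a square-free extension at position $i$. A bifurcate tree over $\mathcal{A}$ is a family of bifurcate words over $\mathcal{A}$ arranged as a rooted tree in which the children of a word $W$ are single-letter extensions of $W$ at pairwise different positions. It is complete if every word of length $n$ in it has exactly $n+1$ children (one extension at each position $0,\dots,n$). *)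

theory Defs
  imports Main
begin

definition square :: "'a list \<Rightarrow> bool" where
  "square w \<longleftrightarrow> (\<exists>x. x \<noteq> [] \<and> w = x @ x)"

definition is_factor :: "'a list \<Rightarrow> 'a list \<Rightarrow> bool" where
  "is_factor u w \<longleftrightarrow> (\<exists>p s. w = p @ u @ s)"

definition square_free :: "'a list \<Rightarrow> bool" where
  "square_free w \<longleftrightarrow> \<not> (\<exists>u. is_factor u w \<and> square u)"

definition extension :: "'a list \<Rightarrow> nat \<Rightarrow> 'a \<Rightarrow> 'a list" where
  "extension W i x = take i W @ [x] @ drop i W"

definition bifurcate :: "'a set \<Rightarrow> 'a list \<Rightarrow> bool" where
  "bifurcate A W \<longleftrightarrow> set W \<subseteq> A \<and> square_free W \<and>
     (\<forall>i \<le> length W. \<exists>x\<in>A. square_free (extension W i x))"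

definition children :: "'n set \<Rightarrow> 'n \<Rightarrow> ('n \<Rightarrow> 'n) \<Rightarrow> 'n \<Rightarrow> 'n set" where
  "children V r par v = {u \<in> V. u \<noteq> r \<and> par u = v}"

definition rooted_tree :: "'n set \<Rightarrow> 'n \<Rightarrow> ('n \<Rightarrow> 'n) \<Rightarrow> bool" where
  "rooted_tree V r par \<longleftrightarrow> r \<in> V \<and> (\<forall>v \<in> V - {r}. par v \<in> V) \<and>
     (\<forall>v \<in> V. \<exists>k. (par ^^ k) v = r)"

definition bifurcate_tree ::
  "'a set \<Rightarrow> 'n set \<Rightarrow> 'n \<Rightarrow> ('n \<Rightarrow> 'n) \<Rightarrow> ('n \<Rightarrow> 'a list) \<Rightarrow> ('n \<Rightarrow> nat) \<Rightarrow> bool" where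
  "bifurcate_tree A V r par lab pos \<longleftrightarrow>
     rooted_tree V r par \<and>
     (\<forall>v \<in> V. bifurcate A (lab v)) \<and>
     (\<forall>u \<in> V - {r}. pos u \<le> length (lab (par u)) \<and>
        (\<exists>x \<in> A. lab u = extension (lab (par u)) (pos u) x)) \<and>
     (\<forall>v \<in> V. inj_on pos (children V r par v))"

definition complete_bifurcate_tree ::
  "'a set \<Rightarrow> 'n set \<Rightarrow> 'n \<Rightarrow> ('n \<Rightarrow> 'n) \<Rightarrow> ('n \<Rightarrow> 'a list) \<Rightarrow> ('n \<Rightarrow> nat) \<Rightarrow> bool" where
  "complete_bifurcate_tree A V r par lab pos \<longleftrightarrow>
     bifurcate_tree A V r par lab pos \<and>
     (\<forall>v \<in> V. finite (children V r par v) \<and>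
        card (children V r par v) = length (lab v) + 1)"

end

theory Submission
  imports Defs
begin

fun pre_sq :: "nat list \<Rightarrow> nat \<Rightarrow> bool" where
 "pre_sq w 0 = False"
| "pre_sq w (Suc l) = (take (Suc l) w = take (Suc l) (drop (Suc l) w) \<or> pre_sq w l)"
fun sqfc :: "nat list \<Rightarrow> bool" where
 "sqfc [] = True"
| "sqfc (a#w) = (\<not> pre_sq (a#w) (length (a#w) div 2) \<and> sqfc w)"
fun nf :: "nat list \<Rightarrow> bool" where
 "nf [] = True"
| "nf (x#w) = (x \<le> length (remdups w) \<and> nf w)"
fun gen :: "nat \<Rightarrow> nat list list" where
 "gen 0 = [[]]"
| "gen (Suc n) = concat (map (\<lambda>w. filter (\<lambda>w'. nf w' \<and> sqfc w') (map (\<lambda>x. x#w) [0,1,2,3])) (gen n))"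
definition isperm :: "nat list \<Rightarrow> bool" where
 "isperm p = (length p = 4 \<and> distinct p \<and> list_all (\<lambda>z. z < 4) p)"
fun ok :: "(nat list \<times> nat \<times> nat list list) list \<Rightarrow> bool" where
 "ok [] = True"
| "ok ((u,i,gs)#rest) = (ok rest \<and> i < 7 \<and> list_all2 (\<lambda>y p. isperm p \<and>
     (\<not> sqfc (take 7 (take i u @ [y] @ drop i u)) \<or> map (\<lambda>z. p!z) (take 7 (take i u @ [y] @ drop i u)) \<in> set (map fst rest))) [0,1,2,3] gs)"
definition cert :: "(nat list \<times> nat \<times> nat list list) list" where
 "cert = [
  ([3,1,2,3,2,1,0], 1, [[3,0,1,2],[0,1,2,3],[3,0,1,2],[0,1,2,3]]),
  ([2,1,0,2,0,1,0], 1, [[1,0,2,3],[0,1,2,3],[0,1,2,3],[1,0,2,3]]),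
  ([3,0,2,3,2,1,0], 1, [[0,1,2,3],[3,0,1,2],[3,0,1,2],[0,1,2,3]]),
  ([0,1,2,0,2,1,0], 1, [[0,1,2,3],[0,1,2,3],[2,0,1,3],[2,0,1,3]]),
  ([2,0,3,2,0,1,0], 0, [[1,0,2,3],[1,0,2,3],[0,1,2,3],[0,1,2,3]]),
  ([2,3,0,2,0,1,0], 1, [[1,0,2,3],[1,0,2,3],[0,1,2,3],[0,1,2,3]]),
  ([2,3,1,2,0,1,0], 1, [[1,0,2,3],[1,0,2,3],[0,1,2,3],[0,1,2,3]]),
  ([1,2,3,1,2,1,0], 0, [[3,0,1,2],[0,1,2,3],[3,0,1,2],[0,1,2,3]]),
  ([0,2,3,0,2,1,0], 0, [[0,1,2,3],[2,0,1,3],[2,0,1,3],[0,1,2,3]]),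
  ([3,0,1,3,2,1,0], 1, [[0,1,2,3],[3,0,1,2],[3,0,1,2],[0,1,2,3]]),
  ([0,1,3,0,2,1,0], 1, [[0,1,2,3],[0,1,2,3],[2,0,1,3],[2,0,1,3]]),
  ([0,3,2,0,2,1,0], 1, [[0,1,2,3],[2,0,1,3],[2,0,1,3],[0,1,2,3]]),
  ([1,2,0,1,2,1,0], 0, [[0,1,2,3],[0,1,2,3],[2,0,1,3],[2,0,1,3]]),
  ([0,3,1,0,2,1,0], 1, [[0,1,2,3],[2,0,1,3],[2,0,1,3],[0,1,2,3]]),
  ([3,1,0,3,2,1,0], 1, [[3,0,1,2],[0,1,2,3],[3,0,1,2],[0,1,2,3]]),
  ([3,2,0,3,2,1,0], 0, [[0,1,2,3],[3,0,1,2],[3,0,1,2],[0,1,2,3]]),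
  ([1,3,0,1,2,1,0], 1, [[2,0,1,3],[0,1,2,3],[2,0,1,3],[0,1,2,3]]),
  ([2,1,3,2,0,1,0], 1, [[1,0,2,3],[0,1,2,3],[0,1,2,3],[1,0,2,3]]),
  ([1,0,3,1,2,1,0], 1, [[0,1,2,3],[0,1,2,3],[3,0,1,2],[3,0,1,2]]),
  ([0,2,0,1,2,1,0], 3, [[0,1,2,3],[0,1,2,3],[0,1,2,3],[3,0,1,2]]),
  ([3,1,0,1,2,1,0], 1, [[0,1,2,3],[0,1,2,3],[2,0,1,3],[0,1,2,3]]),
  ([1,3,0,3,2,1,0], 1, [[0,1,2,3],[0,1,2,3],[3,0,1,2],[0,1,2,3]]),
  ([3,2,0,1,2,1,0], 2, [[0,1,2,3],[2,0,1,3],[0,1,2,3],[2,0,1,3]]),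
  ([3,2,3,0,2,1,0], 3, [[0,1,2,3],[2,0,1,3],[0,1,2,3],[0,1,2,3]]),
  ([3,2,1,2,0,1,0], 1, [[1,0,2,3],[0,1,2,3],[0,1,2,3],[0,1,2,3]]),
  ([2,1,3,1,2,1,0], 1, [[3,0,1,2],[0,1,2,3],[0,1,2,3],[0,1,2,3]]),
  ([1,0,1,2,0,1,0], 3, [[0,1,2,3],[0,1,2,3],[0,1,2,3],[1,0,2,3]]),
  ([2,1,0,1,2,1,0], 1, [[0,1,2,3],[0,1,2,3],[0,1,2,3],[2,0,1,3]]),
  ([2,1,2,0,2,1,0], 3, [[0,1,2,3],[0,1,2,3],[0,1,2,3],[2,0,1,3]]),
  ([2,0,1,0,2,1,0], 1, [[0,1,2,3],[0,1,2,3],[0,1,2,3],[2,0,1,3]]),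
  ([1,2,3,0,2,1,0], 2, [[2,0,1,3],[2,0,1,3],[0,1,2,3],[0,1,2,3]]),
  ([0,2,1,3,2,1,0], 2, [[3,0,1,2],[0,1,2,3],[0,1,2,3],[3,0,1,2]]),
  ([3,0,1,0,2,1,0], 1, [[0,1,2,3],[0,1,2,3],[2,0,1,3],[0,1,2,3]]),
  ([1,0,3,0,2,1,0], 1, [[0,1,2,3],[0,1,2,3],[2,0,1,3],[0,1,2,3]]),
  ([0,1,0,2,0,1,0], 3, [[0,1,2,3],[0,1,2,3],[0,1,2,3],[1,0,2,3]]),
  ([0,2,0,3,2,1,0], 3, [[0,1,2,3],[3,0,1,2],[0,1,2,3],[0,1,2,3]]),
  ([1,2,3,2,0,1,0], 1, [[1,0,2,3],[0,1,2,3],[0,1,2,3],[0,1,2,3]]),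
  ([2,1,3,0,2,1,0], 2, [[2,0,1,3],[0,1,2,3],[2,0,1,3],[0,1,2,3]]),
  ([3,2,3,1,2,1,0], 3, [[2,0,1,3],[0,1,2,3],[0,1,2,3],[0,1,2,3]]),
  ([2,3,0,1,2,1,0], 2, [[0,1,2,3],[2,0,1,3],[2,0,1,3],[0,1,2,3]]),
  ([2,3,1,3,2,1,0], 1, [[3,0,1,2],[0,1,2,3],[0,1,2,3],[0,1,2,3]]),
  ([2,3,1,0,2,1,0], 2, [[2,0,1,3],[0,1,2,3],[2,0,1,3],[0,1,2,3]]),
  ([0,3,1,3,2,1,0], 1, [[0,1,2,3],[0,1,2,3],[3,0,1,2],[0,1,2,3]]),
  ([3,0,3,2,0,1,0], 3, [[0,1,2,3],[1,0,2,3],[0,1,2,3],[0,1,2,3]]),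
  ([2,1,0,3,2,1,0], 2, [[0,1,2,3],[0,1,2,3],[3,0,1,2],[3,0,1,2]]),
  ([2,0,3,0,2,1,0], 1, [[0,1,2,3],[2,0,1,3],[0,1,2,3],[0,1,2,3]]),
  ([0,1,3,1,2,1,0], 1, [[0,1,2,3],[0,1,2,3],[3,0,1,2],[0,1,2,3]]),
  ([0,2,1,2,0,1,0], 1, [[0,1,2,3],[0,1,2,3],[0,1,2,3],[1,0,2,3]]),
  ([1,2,1,3,2,1,0], 3, [[3,0,1,2],[0,1,2,3],[0,1,2,3],[0,1,2,3]]),
  ([0,2,3,1,2,1,0], 2, [[3,0,1,2],[3,0,1,2],[0,1,2,3],[0,1,2,3]]),
  ([1,0,3,2,0,1,0], 2, [[0,1,2,3],[1,0,2,3],[1,0,2,3],[0,1,2,3]]),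
  ([0,2,3,2,0,1,0], 1, [[0,1,2,3],[1,0,2,3],[0,1,2,3],[0,1,2,3]]),
  ([3,0,1,2,0,1,0], 2, [[0,1,2,3],[0,1,2,3],[1,0,2,3],[1,0,2,3]]),
  ([2,0,2,3,2,1,0], 3, [[0,1,2,3],[3,0,1,2],[0,1,2,3],[0,1,2,3]]),
  ([2,3,0,3,2,1,0], 1, [[0,1,2,3],[3,0,1,2],[0,1,2,3],[0,1,2,3]]),
  ([1,2,0,3,2,1,0], 2, [[0,1,2,3],[3,0,1,2],[0,1,2,3],[3,0,1,2]]),
  ([2,3,2,0,2,1,0], 3, [[0,1,2,3],[2,0,1,3],[0,1,2,3],[0,1,2,3]]),
  ([0,3,1,2,0,1,0], 2, [[1,0,2,3],[0,1,2,3],[1,0,2,3],[0,1,2,3]]),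
  ([2,0,3,1,2,1,0], 2, [[0,1,2,3],[3,0,1,2],[3,0,1,2],[0,1,2,3]]),
  ([0,1,3,2,0,1,0], 2, [[1,0,2,3],[0,1,2,3],[1,0,2,3],[0,1,2,3]]),
  ([0,3,0,2,0,1,0], 3, [[0,1,2,3],[1,0,2,3],[0,1,2,3],[0,1,2,3]]),
  ([2,1,2,3,2,1,0], 3, [[3,0,1,2],[0,1,2,3],[0,1,2,3],[0,1,2,3]]),
  ([2,0,1,3,2,1,0], 2, [[0,1,2,3],[0,1,2,3],[3,0,1,2],[3,0,1,2]]),
  ([1,3,2,0,2,1,0], 2, [[0,1,2,3],[2,0,1,3],[0,1,2,3],[0,1,2,3]]),
  ([0,1,2,3,2,1,0], 2, [[3,0,1,2],[0,1,2,3],[0,1,2,3],[0,1,2,3]]),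
  ([1,3,1,0,2,1,0], 3, [[0,1,2,3],[0,1,2,3],[2,0,1,3],[0,1,2,3]]),
  ([1,0,2,3,2,1,0], 2, [[0,1,2,3],[3,0,1,2],[0,1,2,3],[0,1,2,3]]),
  ([1,3,1,2,0,1,0], 3, [[1,0,2,3],[0,1,2,3],[0,1,2,3],[0,1,2,3]]),
  ([3,1,3,0,2,1,0], 3, [[0,1,2,3],[0,1,2,3],[2,0,1,3],[0,1,2,3]]),
  ([3,1,2,0,2,1,0], 2, [[0,1,2,3],[0,1,2,3],[0,1,2,3],[2,0,1,3]]),
  ([3,1,3,2,0,1,0], 3, [[1,0,2,3],[0,1,2,3],[0,1,2,3],[0,1,2,3]]),
  ([3,1,0,2,0,1,0], 2, [[0,1,2,3],[0,1,2,3],[0,1,2,3],[1,0,2,3]]),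
  ([0,1,0,3,2,1,0], 3, [[0,1,2,3],[0,1,2,3],[3,0,1,2],[0,1,2,3]]),
  ([1,0,1,3,2,1,0], 3, [[0,1,2,3],[0,1,2,3],[3,0,1,2],[0,1,2,3]]),
  ([1,3,0,2,0,1,0], 2, [[0,1,2,3],[1,0,2,3],[0,1,2,3],[0,1,2,3]]),
  ([0,3,0,1,2,1,0], 3, [[0,1,2,3],[0,1,2,3],[0,1,2,3],[0,1,2,3]]),
  ([3,0,3,1,2,1,0], 3, [[0,1,2,3],[0,1,2,3],[0,1,2,3],[0,1,2,3]])]"
lemma gen7: "list_all (\<lambda>w. w \<in> set (map fst cert)) (gen 7)" by code_simp
lemma okc: "ok cert" by code_simp

lemma sf_map:
  assumes "square_free w" "inj_on f (set w)"
  shows "square_free (map f w)"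
proof -
  { fix u assume "is_factor u (map f w)" "square u"
    then obtain p s x where e: "map f w = p @ (x @ x) @ s" "x \<noteq> []"
      unfolding is_factor_def square_def by blast
    have "map f w = p @ (x @ (x @ s))" using e by simp
    hence "\<exists>us vs. w = us @ vs \<and> p = map f us \<and> x @ (x @ s) = map f vs"
      by (simp add: map_eq_append_conv)
    then obtain p' r where w1: "w = p' @ r" "map f r = x @ (x @ s)" by metis
    hence "\<exists>us vs. r = us @ vs \<and> x = map f us \<and> x @ s = map f vs"
      by (simp add: map_eq_append_conv)
    then obtain y1 r2 where w2: "r = y1 @ r2" "map f y1 = x" "map f r2 = x @ s" by metis
    hence "\<exists>us vs. r2 = us @ vs \<and> x = map f us \<and> s = map f vs"
      by (simp add: map_eq_append_conv)
    then obtain y2 s' where w3: "r2 = y2 @ s'" "map f y2 = x" by metis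
    have "set y1 \<subseteq> set w" "set y2 \<subseteq> set w" using w1 w2 w3 by auto
    hence "inj_on f (set y1 \<union> set y2)" using assms(2) by (meson inj_on_subset Un_least)
    hence "y1 = y2" using w2 w3 by (metis inj_on_map_eq_map)
    moreover have "y1 \<noteq> []" using w2 e by auto
    moreover have "w = p' @ (y1 @ y2) @ s'" using w1 w2 w3 by simp
    ultimately have "\<not> square_free w"
      unfolding square_free_def is_factor_def square_def by blast
    hence False using assms by simp }
  thus ?thesis unfolding square_free_def by blast
qed

lemma sf_take: "square_free w \<Longrightarrow> square_free (take n w)"
  unfolding square_free_def is_factor_def
  by (metis append.assoc append_take_drop_id)

lemma sf_tl: "square_free (a # w) \<Longrightarrow> square_free w"
  unfolding square_free_def is_factor_def
  by (metis append_Cons)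

lemma pre_sq_not_sf: "pre_sq w l \<Longrightarrow> 2 * l \<le> length w \<Longrightarrow> \<not> square_free w"
proof (induction l)
  case 0 then show ?case by simp
next
  case (Suc l)
  show ?case
  proof (cases "pre_sq w l")
    case True then show ?thesis using Suc by simp
  next
    case False
    let ?m = "Suc l"
    have eq: "take ?m w = take ?m (drop ?m w)" using Suc False by simp
    have "w = take ?m w @ take ?m (drop ?m w) @ drop ?m (drop ?m w)"
      by (metis append_take_drop_id)
    hence "w = [] @ (take ?m w @ take ?m w) @ drop ?m (drop ?m w)" using eq by simp
    moreover have "length (take ?m w) = ?m" using Suc.prems(2) by simp
    hence "take ?m w \<noteq> []" by (metis length_0_conv nat.distinct(1))
    ultimately show ?thesis unfolding square_free_def is_factor_def square_def by blast
  qed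
qed

lemma sf_sqfc: "square_free w \<Longrightarrow> sqfc w"
proof (induction w)
  case Nil then show ?case by simp
next
  case (Cons a w)
  have "\<not> pre_sq (a # w) (length (a # w) div 2)"
    using pre_sq_not_sf Cons.prems by fastforce
  moreover have "sqfc w" using Cons.IH sf_tl[OF Cons.prems] by blast
  ultimately show ?case by simp
qed

lemma nf_set: "nf w \<Longrightarrow> set w = {0..<card (set w)}"
proof (induction w)
  case Nil then show ?case by simp
next
  case (Cons x w)
  have x: "x \<le> card (set w)" using Cons.prems by (simp add: length_remdups_card_conv)
  have IH: "set w = {0..<card (set w)}" using Cons by simp
  show ?case
  proof (cases "x < card (set w)")
    case True
    then have "x \<in> set w" using IH by auto
    then show ?thesis using IH by (simp add: insert_absorb)
  next
    case False
    then have xe: "x = card (set w)" using x by simp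
    have "set (x # w) = {0..<Suc (card (set w))}" using IH xe by (simp add: atLeast0_lessThan_Suc)
    then show ?thesis by simp
  qed
qed

lemma nf_exists:
  "set w \<subseteq> {0..<4} \<Longrightarrow> \<exists>g. inj_on g {0..<4::nat} \<and> g ` {0..<4} \<subseteq> {0..<4} \<and> nf (map g w)"
proof (induction w)
  case Nil
  show ?case by (rule exI[of _ id]) simp
next
  case (Cons x w)
  then obtain g where g: "inj_on g {0..<4::nat}" "g ` {0..<4} \<subseteq> {0..<4}" "nf (map g w)" by auto
  let ?v = "map g w"
  let ?k = "card (set ?v)"
  have sv: "set ?v = {0..<?k}" using nf_set g(3) by blast
  have x4: "x < 4" using Cons.prems by auto
  have gx: "g x < 4" using g(2) x4 by (auto simp: image_subset_iff)
  show ?case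
  proof (cases "g x \<in> set ?v")
    case True
    then have "g x < ?k" using sv by auto
    then have "nf (map g (x # w))" using g(3) by (simp add: length_remdups_card_conv)
    then show ?thesis using g by blast
  next
    case False
    then have kx: "?k \<le> g x" using sv by auto
    define h where "h z = (if z = ?k then g x else if z = g x then ?k else z)" for z
    have hinj: "inj h" unfolding inj_def h_def by auto
    have hr: "h ` {0..<4} \<subseteq> {0..<4}" using kx gx unfolding h_def by auto
    have hv: "map h ?v = ?v"
    proof -
      have "\<forall>z\<in>set ?v. h z = z"
      proof
        fix z assume z: "z \<in> set ?v"
        then have "z < ?k" using sv by (metis atLeastLessThan_iff)
        moreover have "z \<noteq> g x" using z False by blast
        ultimately show "h z = z" unfolding h_def by simp
      qed
      then show ?thesis by (simp add: map_idI)
    qed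
    have "map (h \<circ> g) (x # w) = ?k # ?v" using hv unfolding h_def by simp
    moreover have "nf (?k # ?v)" using g(3) by (simp add: length_remdups_card_conv)
    ultimately have "nf (map (h \<circ> g) (x # w))" by (simp only:)
    moreover have "inj_on (h \<circ> g) {0..<4}" using hinj g(1) by (simp add: comp_inj_on inj_on_subset)
    moreover have "(h \<circ> g) ` {0..<4} \<subseteq> {0..<4}" using hr g(2) by (auto simp: image_comp[symmetric])
    ultimately show ?thesis by blast
  qed
qed

lemma gen_complete:
  "nf w \<Longrightarrow> sqfc w \<Longrightarrow> set w \<subseteq> {0..<4} \<Longrightarrow> length w = n \<Longrightarrow> w \<in> set (gen n)"
proof (induction n arbitrary: w)
  case 0 then show ?case by simp
next
  case (Suc n)
  obtain x w' where w: "w = x # w'" using Suc.prems(4) by (metis length_Suc_conv)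
  have "w' \<in> set (gen n)" using Suc w by auto
  moreover have "x \<in> {0,1,2,3}" using Suc.prems w by auto
  ultimately show ?case using Suc.prems w by auto
qed

lemma perm_props:
  assumes "isperm p"
  shows "inj_on (\<lambda>z. p ! z) {0..<4}" "(\<lambda>z. p ! z) ` {0..<4} \<subseteq> {0..<4}"
proof -
  have l: "length p = 4" "distinct p" "\<forall>z\<in>set p. z < 4"
    using assms unfolding isperm_def by (auto simp: list_all_iff)
  show "inj_on (\<lambda>z. p ! z) {0..<4}" using l by (auto simp: inj_on_def nth_eq_iff_index_eq)
  show "(\<lambda>z. p ! z) ` {0..<4} \<subseteq> {0..<4}" using l by auto
qed

lemma la2_nth:
  assumes "list_all2 P [0,1,2,3::nat] gs" "y < 4"
  shows "P y (gs ! y)"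
proof -
  have "length gs = 4" "\<forall>j<4. P ([0,1,2,3::nat] ! j) (gs ! j)"
    using assms(1) by (auto simp: list_all2_conv_all_nth)
  moreover have "[0,1,2,3::nat] ! y = y" using assms(2)
    by (auto simp: less_Suc_eq numeral_eq_Suc)
  ultimately show ?thesis using assms(2) by metis
qed

lemma take_ins:
  assumes "i < n" "n \<le> length W"
  shows "take n (take i W @ [y] @ drop i W) = take n (take i (take n W) @ [y] @ drop i (take n W))"
  using assms apply (simp add: take_append min_def drop_take take_take)
  apply (cases "n - i") apply auto done

lemma descent:
  assumes okc: "ok cs"
    and child: "\<And>v i. v \<in> V \<Longrightarrow> i \<le> length (lab v) \<Longrightarrow> \<exists>c\<in>V. \<exists>x\<in>A. lab c = extension (lab v) i x"
    and sf: "\<And>v. v \<in> V \<Longrightarrow> square_free (lab v) \<and> set (lab v) \<subseteq> A"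
  shows "v \<in> V \<Longrightarrow> 7 \<le> length (lab v) \<Longrightarrow> inj_on f A \<Longrightarrow> f ` A \<subseteq> {0..<4::nat} \<Longrightarrow>
     take 7 (map f (lab v)) \<in> set (map fst cs) \<Longrightarrow> False"
  using okc
proof (induction cs arbitrary: v f)
  case Nil then show ?case by simp
next
  case (Cons e rest)
  obtain u i gs where e: "e = (u, i, gs)" by (cases e) auto
  have okr: "ok rest" and i7: "i < 7" and la: "list_all2 (\<lambda>y p. isperm p \<and>
     (\<not> sqfc (take 7 (take i u @ [y] @ drop i u)) \<or> map (\<lambda>z. p!z) (take 7 (take i u @ [y] @ drop i u)) \<in> set (map fst rest))) [0,1,2,3] gs"
    using Cons.prems e by auto
  show ?case
  proof (cases "take 7 (map f (lab v)) \<in> set (map fst rest)")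
    case True then show ?thesis using Cons.IH[OF Cons.prems(1-4)] okr by blast
  next
    case False
    then have u: "u = take 7 (map f (lab v))" using Cons.prems(5) e by auto
    obtain c x where c: "c \<in> V" "x \<in> A" "lab c = extension (lab v) i x"
      using child[OF Cons.prems(1), of i] i7 Cons.prems(2) by auto
    let ?W = "map f (lab v)"
    let ?y = "f x"
    have y4: "?y < 4" using c(2) Cons.prems(4) by auto
    define p where "p = gs ! ?y"
    have P: "isperm p \<and> (\<not> sqfc (take 7 (take i u @ [?y] @ drop i u)) \<or>
        map (\<lambda>z. p!z) (take 7 (take i u @ [?y] @ drop i u)) \<in> set (map fst rest))"
      using la2_nth[OF la y4] unfolding p_def .
    have cw: "take 7 (map f (lab c)) = take 7 (take i u @ [?y] @ drop i u)"
      using c(3) u take_ins[of i 7 ?W ?y] i7 Cons.prems(2)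
      by (simp add: extension_def take_map drop_map)
    have sfc: "square_free (lab c)" "set (lab c) \<subseteq> A" using sf c(1) by auto
    have "sqfc (take 7 (map f (lab c)))"
      using sf_sqfc sf_take sf_map[OF sfc(1)] inj_on_subset[OF Cons.prems(3) sfc(2)] by blast
    hence mem: "map (\<lambda>z. p!z) (take 7 (map f (lab c))) \<in> set (map fst rest)" using P cw by simp
    define f' where "f' = (\<lambda>z. p ! z) \<circ> f"
    have pp: "inj_on (\<lambda>z. p ! z) {0..<4}" "(\<lambda>z. p ! z) ` {0..<4} \<subseteq> {0..<4}"
      using perm_props P by auto
    have inj': "inj_on f' A" unfolding f'_def
      using comp_inj_on[OF Cons.prems(3) inj_on_subset[OF pp(1) Cons.prems(4)]] .
    have rng': "f' ` A \<subseteq> {0..<4}" unfolding f'_def using pp(2) Cons.prems(4)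
      by (auto simp: image_comp[symmetric])
    have len: "7 \<le> length (lab c)" using c(3) Cons.prems(2) i7 by (simp add: extension_def)
    have "take 7 (map f' (lab c)) \<in> set (map fst rest)" using mem unfolding f'_def
      by (simp add: take_map)
    then show ?thesis using Cons.IH[OF c(1) len inj' rng'] okr by blast
  qed
qed


theorem mainTheorem7:
  fixes A :: "'a set" and V :: "'n set" and r :: 'n and par :: "'n \<Rightarrow> 'n"
    and lab :: "'n \<Rightarrow> 'a list" and pos :: "'n \<Rightarrow> nat"
  assumes "card A = 4"
  shows "\<not> complete_bifurcate_tree A V r par lab pos"
proof
  assume cb: "complete_bifurcate_tree A V r par lab pos"
  have bt: "bifurcate_tree A V r par lab pos" using cb unfolding complete_bifurcate_tree_def by simp
  have rV: "r \<in> V" using bt unfolding bifurcate_tree_def rooted_tree_def by simp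
  have sf: "\<And>v. v \<in> V \<Longrightarrow> square_free (lab v) \<and> set (lab v) \<subseteq> A"
    using bt unfolding bifurcate_tree_def bifurcate_def by auto
  have child: "\<And>v i. v \<in> V \<Longrightarrow> i \<le> length (lab v) \<Longrightarrow> \<exists>c\<in>V. \<exists>x\<in>A. lab c = extension (lab v) i x"
  proof -
    fix v i assume v: "v \<in> V" and i: "i \<le> length (lab v)"
    let ?C = "children V r par v"
    have fin: "finite ?C" and cd: "card ?C = length (lab v) + 1"
      using cb v unfolding complete_bifurcate_tree_def by auto
    have inj: "inj_on pos ?C" using bt v unfolding bifurcate_tree_def by auto
    have sub: "pos ` ?C \<subseteq> {0..length (lab v)}"
      using bt unfolding bifurcate_tree_def children_def by auto
    have "card (pos ` ?C) = card {0..length (lab v)}" using card_image[OF inj] cd by simp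
    hence "pos ` ?C = {0..length (lab v)}" using sub by (simp add: card_subset_eq)
    then obtain c where c: "c \<in> ?C" "pos c = i" using i by (metis atLeastAtMost_iff imageE le0)
    have "c \<in> V - {r}" "par c = v" using c unfolding children_def by auto
    then show "\<exists>c\<in>V. \<exists>x\<in>A. lab c = extension (lab v) i x"
      using bt c(2) unfolding bifurcate_tree_def by fastforce
  qed
  have long: "\<And>k. \<exists>v\<in>V. k \<le> length (lab v)"
  proof -
    fix k show "\<exists>v\<in>V. k \<le> length (lab v)"
    proof (induction k)
      case 0 then show ?case using rV by auto
    next
      case (Suc k)
      then obtain v where "v \<in> V" "k \<le> length (lab v)" by auto
      then obtain c x where "c \<in> V" "lab c = extension (lab v) 0 x" using child by blast
      then show ?case using \<open>k \<le> length (lab v)\<close> by (intro bexI[of _ c]) (auto simp: extension_def)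
    qed
  qed
  obtain v where v: "v \<in> V" "7 \<le> length (lab v)" using long by blast
  have finA: "finite A" using assms by (metis card.infinite zero_neq_numeral)
  obtain f0 where f0: "bij_betw f0 A {0..<4::nat}" using ex_bij_betw_finite_nat[OF finA] assms by metis
  have f0i: "inj_on f0 A" and f0r: "f0 ` A \<subseteq> {0..<4}" using f0 by (auto simp: bij_betw_def)
  let ?w0 = "take 7 (map f0 (lab v))"
  have "set ?w0 \<subseteq> {0..<4}" using sf[OF v(1)] f0r set_take_subset[of 7 "map f0 (lab v)"] by fastforce
  then obtain g where g: "inj_on g {0..<4::nat}" "g ` {0..<4} \<subseteq> {0..<4}" "nf (map g ?w0)"
    using nf_exists by blast
  define f where "f = g \<circ> f0"
  have fi: "inj_on f A" unfolding f_def using comp_inj_on[OF f0i inj_on_subset[OF g(1) f0r]] .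
  have fr: "f ` A \<subseteq> {0..<4}" unfolding f_def using g(2) f0r by (auto simp: image_comp[symmetric])
  have weq: "take 7 (map f (lab v)) = map g ?w0" unfolding f_def by (simp add: take_map)
  have "square_free (take 7 (map f (lab v)))"
    using sf_take sf_map sf[OF v(1)] inj_on_subset[OF fi] by blast
  hence s: "sqfc (take 7 (map f (lab v)))" using sf_sqfc by blast
  have "set (take 7 (map f (lab v))) \<subseteq> {0..<4}" using sf[OF v(1)] fr set_take_subset[of 7 "map f (lab v)"] by fastforce
  moreover have "length (take 7 (map f (lab v))) = 7" using v(2) by simp
  ultimately have "take 7 (map f (lab v)) \<in> set (gen 7)"
    using gen_complete g(3) weq s by metis
  hence "take 7 (map f (lab v)) \<in> set (map fst cert)" using gen7 by (simp add: list_all_iff)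
  then show False using descent[OF okc child sf v fi fr] by blast
qed

end
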